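(* Let $H$ be obtained from a graph $G$ on vertices $v_1,\dots,v_k$ by expanding each $v_i$ by the graph $M_i$. Then the number of minimal separators of $H$ is at most the number of minimal separators of $G$ plus $\sum_{i=1}^k$ (number of minimal separators of $M_i$).
   Context: Expansion: given a graph $G$ on vertices $v_1,\dots,v_k$ and pairwise disjoint graphs $M_i=(V_i,E_i)$, the graph $H$ obtained by expanding each $v_i$ by $M_i$ has vertex set $V_1\cup\dots\cup V_k$ and edge set $E_1\cup\dots\cup E_k\cup\{ab \mid a\in V_i, b\in V_j, v_iv_j\in E(G)\}$. A minimal separator is a set $S$ that, for some vertices $u,v$, separates $u$ from $v$ and is inclusion-minimal with this property. *)

theory Defs
  imports Main
begin

type_synonym 'a graph = "'a set \<times> 'a set set"

definition verts :: "'a graph \<Rightarrow> 'a set" where "verts G = fst G"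
definition edges :: "'a graph \<Rightarrow> 'a set set" where "edges G = snd G"

definition is_graph :: "'a graph \<Rightarrow> bool" where
  "is_graph G \<longleftrightarrow> finite (verts G) \<and>
     (\<forall>e\<in>edges G. \<exists>x y. e = {x, y} \<and> x \<noteq> y \<and> x \<in> verts G \<and> y \<in> verts G)"

definition connected_avoiding :: "'a graph \<Rightarrow> 'a set \<Rightarrow> 'a \<Rightarrow> 'a \<Rightarrow> bool" where
  "connected_avoiding G S u v \<longleftrightarrow>
     (\<lambda>x y. x \<in> verts G - S \<and> y \<in> verts G - S \<and> {x, y} \<in> edges G)\<^sup>*\<^sup>* u v"

definition separates :: "'a graph \<Rightarrow> 'a set \<Rightarrow> 'a \<Rightarrow> 'a \<Rightarrow> bool" where
  "separates G S u v \<longleftrightarrow> S \<subseteq> verts G \<and> u \<in> verts G - S \<and> v \<in> verts G - S \<and>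
     \<not> connected_avoiding G S u v"

definition minimal_separator :: "'a graph \<Rightarrow> 'a set \<Rightarrow> bool" where
  "minimal_separator G S \<longleftrightarrow>
     (\<exists>u v. separates G S u v \<and> (\<forall>T. T \<subset> S \<longrightarrow> \<not> separates G T u v))"

definition minimal_separators :: "'a graph \<Rightarrow> 'a set set" where
  "minimal_separators G = {S. minimal_separator G S}"

definition expand :: "'v graph \<Rightarrow> ('v \<Rightarrow> 'a graph) \<Rightarrow> 'a graph" where
  "expand G M =
     ((\<Union>v\<in>verts G. verts (M v)),
      (\<Union>v\<in>verts G. edges (M v)) \<union>
      {{a, b} | a b v w. v \<in> verts G \<and> w \<in> verts G \<and> a \<in> verts (M v) \<and> b \<in> verts (M w)
                          \<and> {v, w} \<in> edges G})"

end

theory Submission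
  imports Defs
begin

locale expn =
  fixes G :: "'v graph" and M :: "'v \<Rightarrow> 'a graph"
  assumes gG: "is_graph G"
    and gM: "\<forall>v\<in>verts G. is_graph (M v) \<and> verts (M v) \<noteq> {}"
    and dj: "\<forall>v\<in>verts G. \<forall>w\<in>verts G. v \<noteq> w \<longrightarrow> verts (M v) \<inter> verts (M w) = {}"
begin

abbreviation H where "H \<equiv> expand G M"

lemma vH: "verts H = (\<Union>v\<in>verts G. verts (M v))" by (simp add: expand_def verts_def)
lemma eH: "edges H = (\<Union>v\<in>verts G. edges (M v)) \<union>
      {{a, b} | a b v w. v \<in> verts G \<and> w \<in> verts G \<and> a \<in> verts (M v) \<and> b \<in> verts (M w)
                          \<and> {v, w} \<in> edges G}" by (simp add: expand_def edges_def)

lemma uniq: "x \<in> verts (M v) \<Longrightarrow> x \<in> verts (M w) \<Longrightarrow> v \<in> verts G \<Longrightarrow> w \<in> verts G \<Longrightarrow> v = w"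
  using dj by blast

lemma G_edge: assumes "{v,w} \<in> edges G" shows "v \<in> verts G \<and> w \<in> verts G \<and> v \<noteq> w"
proof -
  from gG assms obtain x y where "{v,w} = {x,y}" "x\<noteq>y" "x\<in>verts G" "y\<in>verts G"
    unfolding is_graph_def by blast
  thus ?thesis by (auto simp: doubleton_eq_iff)
qed

lemma M_edge: assumes "w \<in> verts G" "{x,y} \<in> edges (M w)"
  shows "x \<in> verts (M w) \<and> y \<in> verts (M w)"
proof -
  from gM assms obtain a b where "{x,y} = {a,b}" "a \<in> verts (M w)" "b\<in>verts (M w)"
    unfolding is_graph_def by blast
  thus ?thesis by (auto simp: doubleton_eq_iff)
qed

lemma edge_cases: assumes "{x,y} \<in> edges H"
  shows "(\<exists>w\<in>verts G. x \<in> verts (M w) \<and> y \<in> verts (M w) \<and> {x,y} \<in> edges (M w))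
     \<or> (\<exists>v w. x \<in> verts (M v) \<and> y \<in> verts (M w) \<and> {v,w} \<in> edges G)"
proof -
  from assms consider (a) "{x,y} \<in> (\<Union>v\<in>verts G. edges (M v))"
    | (b) "{x,y} \<in> {{a, b} | a b v w. v \<in> verts G \<and> w \<in> verts G \<and> a \<in> verts (M v) \<and> b \<in> verts (M w)
                          \<and> {v, w} \<in> edges G}" unfolding eH by blast
  then show ?thesis
  proof cases
    case a then obtain w where "w\<in>verts G" "{x,y} \<in> edges (M w)" by blast
    then show ?thesis using M_edge by blast
  next
    case b then obtain a b v w where ab: "{x,y} = {a,b}" "a \<in> verts (M v)" "b \<in> verts (M w)" "{v,w}\<in>edges G" by blast
    from ab(1) have "(x=a \<and> y=b) \<or> (x=b \<and> y=a)" by (auto simp: doubleton_eq_iff)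
    then show ?thesis
    proof
      assume "x=a\<and>y=b" then show ?thesis using ab by blast
    next
      assume "x=b\<and>y=a" then show ?thesis using ab by (metis insert_commute)
    qed
  qed
qed

lemma cross_edge: "v \<in> verts G \<Longrightarrow> w \<in> verts G \<Longrightarrow> a \<in> verts (M v) \<Longrightarrow> b \<in> verts (M w)
   \<Longrightarrow> {v,w} \<in> edges G \<Longrightarrow> {a,b} \<in> edges H"
  unfolding eH by blast

lemma M_in_H: "w \<in> verts G \<Longrightarrow> e \<in> edges (M w) \<Longrightarrow> e \<in> edges H"
  unfolding eH by blast

definition blow where "blow S' = (\<Union>w\<in>S'. verts (M w))"
definition nbr where "nbr i = (\<Union>w\<in>{w\<in>verts G. {i,w}\<in>edges G}. verts (M w))"

lemma proj:
  assumes "connected_avoiding H (blow T) a b" "a \<in> verts (M p)" "p \<in> verts G"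
    "b \<in> verts (M q)" "q \<in> verts G" "T \<subseteq> verts G"
  shows "connected_avoiding G T p q"
proof -
  have r: "(\<lambda>x y. x \<in> verts H - blow T \<and> y \<in> verts H - blow T \<and> {x,y} \<in> edges H)\<^sup>*\<^sup>* a b"
    using assms(1) unfolding connected_avoiding_def .
  have "\<forall>q\<in>verts G. b \<in> verts (M q) \<longrightarrow> connected_avoiding G T p q"
    using r
  proof (induction rule: rtranclp_induct)
    case base
    show ?case
    proof (intro ballI impI)
      fix q assume "q \<in> verts G" "a \<in> verts (M q)"
      then have "q = p" using assms(2,3) uniq by blast
      then show "connected_avoiding G T p q" unfolding connected_avoiding_def by simp
    qed
  next
    case (step y z)
    show ?case
    proof (intro ballI impI)
      fix q assume q: "q \<in> verts G" "z \<in> verts (M q)"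
      from step(2) have y: "y \<in> verts H - blow T" "z \<in> verts H - blow T" "{y,z} \<in> edges H" by auto
      then obtain q' where q': "q' \<in> verts G" "y \<in> verts (M q')" unfolding vH by auto
      with step(3) have IH: "connected_avoiding G T p q'" by auto
      from edge_cases[OF y(3)] show "connected_avoiding G T p q"
      proof
        assume "\<exists>w\<in>verts G. y \<in> verts (M w) \<and> z \<in> verts (M w) \<and> {y,z} \<in> edges (M w)"
        then obtain w where "w \<in> verts G" "y \<in> verts (M w)" "z \<in> verts (M w)" by blast
        then have "q' = w" "q = w" using uniq q q' by blast+
        then show ?thesis using IH by simp
      next
        assume "\<exists>v w. y \<in> verts (M v) \<and> z \<in> verts (M w) \<and> {v,w} \<in> edges G"
        then obtain v w where vw: "y \<in> verts (M v)" "z \<in> verts (M w)" "{v,w} \<in> edges G" by blast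
        have "v \<in> verts G" "w \<in> verts G" using G_edge vw(3) by auto
        hence "v = q'" "w = q" using uniq q q' vw by blast+
        moreover have "q' \<notin> T" using y(1) q'(2) unfolding blow_def by blast
        moreover have "q \<notin> T" using y(2) q(2) unfolding blow_def by blast
        ultimately show ?thesis unfolding connected_avoiding_def
          apply (rule_tac b=q' in rtranclp.rtrancl_into_rtrancl)
          subgoal using IH unfolding connected_avoiding_def by simp
          subgoal using vw q q' \<open>v \<in> verts G\<close> by simp
          done
      qed
    qed
  qed
  thus ?thesis using assms(4,5) by blast
qed

lemma lift:
  assumes "(\<lambda>x y. x \<in> verts G - S' \<and> y \<in> verts G - S' \<and> {x,y} \<in> edges G)\<^sup>+\<^sup>+ p q"
    "S' = {w\<in>verts G. verts (M w) \<subseteq> S}"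
  shows "\<forall>a\<in>verts (M p) - S. \<forall>b\<in>verts (M q) - S. connected_avoiding H S a b"
  using assms(1)
proof (induction rule: tranclp_induct)
  case (base q)
  show ?case
  proof (intro ballI)
    fix a b assume a: "a \<in> verts (M p) - S" and b: "b \<in> verts (M q) - S"
    have "a \<in> verts H" "b \<in> verts H" "{a,b} \<in> edges H" using base a b vH cross_edge by auto
    thus "connected_avoiding H S a b" unfolding connected_avoiding_def using a b
      by (intro r_into_rtranclp) auto
  qed
next
  case (step y z)
  show ?case
  proof (intro ballI)
    fix a b assume a: "a \<in> verts (M p) - S" and b: "b \<in> verts (M z) - S"
    from step(2) have yz: "y \<in> verts G" "y \<notin> S'" "z \<in> verts G" "{y,z} \<in> edges G" by auto
    then obtain r where r: "r \<in> verts (M y)" "r \<notin> S" using assms(2) by auto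
    with step(3) a have c: "connected_avoiding H S a r" by blast
    have "{r,b} \<in> edges H" "r \<in> verts H" "b \<in> verts H" using yz r b cross_edge vH by auto
    then show "connected_avoiding H S a b" unfolding connected_avoiding_def
      apply (rule_tac b=r in rtranclp.rtrancl_into_rtrancl)
      subgoal using c unfolding connected_avoiding_def by simp
      subgoal using r b by simp
      done
  qed
qed

lemma M_to_H:
  assumes "connected_avoiding (M i) T a b" "i \<in> verts G" "S \<inter> verts (M i) \<subseteq> T"
  shows "connected_avoiding H S a b"
  using assms(1) unfolding connected_avoiding_def
proof (induction rule: rtranclp_induct)
  case base then show ?case by simp
next
  case (step y z)
  show ?case
    apply (rule_tac b=y in rtranclp.rtrancl_into_rtrancl)
    subgoal using step(3) .
    subgoal using step(2) assms(2,3) vH M_in_H[OF assms(2)] M_edge[OF assms(2)] by auto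
    done
qed

lemma stay:
  assumes "connected_avoiding H (nbr i \<union> T) a b" "a \<in> verts (M i)" "i \<in> verts G"
  shows "b \<in> verts (M i) \<and> connected_avoiding (M i) T a b"
  using assms(1) unfolding connected_avoiding_def
proof (induction rule: rtranclp_induct)
  case base then show ?case using assms(2) by simp
next
  case (step y z)
  from step(2) have y: "y \<notin> nbr i \<union> T" "z \<notin> nbr i \<union> T" "{y,z} \<in> edges H" by auto
  from step(3) have yi: "y \<in> verts (M i)" by simp
  from edge_cases[OF y(3)] show ?case
  proof
    assume "\<exists>w\<in>verts G. y \<in> verts (M w) \<and> z \<in> verts (M w) \<and> {y,z} \<in> edges (M w)"
    then obtain w where w: "w \<in> verts G" "y \<in> verts (M w)" "z \<in> verts (M w)" "{y,z} \<in> edges (M w)" by blast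
    then have "w = i" using uniq yi assms(3) by blast
    then show ?thesis using w y step(3) M_edge
      by (auto elim: rtranclp.rtrancl_into_rtrancl)
  next
    assume "\<exists>v w. y \<in> verts (M v) \<and> z \<in> verts (M w) \<and> {v,w} \<in> edges G"
    then obtain v w where vw: "y \<in> verts (M v)" "z \<in> verts (M w)" "{v,w} \<in> edges G" by blast
    have "v \<in> verts G" "w \<in> verts G" using G_edge vw(3) by auto
    hence "v = i" using uniq yi assms(3) vw by blast
    hence "z \<in> nbr i" using vw \<open>w \<in> verts G\<close> by (auto simp: nbr_def)
    with y show ?thesis by blast
  qed
qed

lemma nbr_disj: assumes "i \<in> verts G" shows "nbr i \<inter> verts (M i) = {}"
proof -
  { fix z w assume "w \<in> verts G" "{i,w} \<in> edges G" "z \<in> verts (M w)" "z \<in> verts (M i)"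
    then have "w = i" using uniq assms by blast
    with \<open>{i,w} \<in> edges G\<close> have False using G_edge by blast }
  thus ?thesis by (auto simp: nbr_def)
qed

lemma classify:
  assumes "minimal_separator H S"
  shows "(\<exists>S'. minimal_separator G S' \<and> S = blow S') \<or>
         (\<exists>i\<in>verts G. \<exists>T. minimal_separator (M i) T \<and> S = nbr i \<union> T)"
proof -
  from assms obtain u v where sep: "separates H S u v"
    and min: "\<forall>T. T \<subset> S \<longrightarrow> \<not> separates H T u v"
    unfolding minimal_separator_def by blast
  from sep have SH: "S \<subseteq> verts H" and u: "u \<in> verts H" "u \<notin> S" and v: "v \<in> verts H" "v \<notin> S"
    and nc: "\<not> connected_avoiding H S u v" unfolding separates_def by auto
  obtain i where i: "i \<in> verts G" "u \<in> verts (M i)" using u vH by auto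
  obtain j where j: "j \<in> verts G" "v \<in> verts (M j)" using v vH by auto
  show ?thesis
  proof (cases "i = j")
    case False
    define S' where "S' = {w\<in>verts G. verts (M w) \<subseteq> S}"
    have S'G: "S' \<subseteq> verts G" by (auto simp: S'_def)
    have S0S: "blow S' \<subseteq> S" by (auto simp: blow_def S'_def)
    have liftij: False if ca: "connected_avoiding G S' i j"
    proof -
      from ca have "(\<lambda>x y. x \<in> verts G - S' \<and> y \<in> verts G - S' \<and> {x,y} \<in> edges G)\<^sup>*\<^sup>* i j"
        unfolding connected_avoiding_def .
      note rt = rtranclpD[OF this]
      have "(\<lambda>x y. x \<in> verts G - S' \<and> y \<in> verts G - S' \<and> {x,y} \<in> edges G)\<^sup>+\<^sup>+ i j"
        using rt False by blast
      from lift[OF this S'_def] have "connected_avoiding H S u v" using i j u v by blast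
      with nc show False ..
    qed
    have "separates H (blow S') u v"
      unfolding separates_def
    proof (intro conjI)
      show "blow S' \<subseteq> verts H" using S0S SH by blast
      show "u \<in> verts H - blow S'" "v \<in> verts H - blow S'" using u v S0S by auto
      show "\<not> connected_avoiding H (blow S') u v"
      proof
        assume c: "connected_avoiding H (blow S') u v"
        show False by (rule liftij[OF proj[OF c i(2) i(1) j(2) j(1) S'G]])
      qed
    qed
    have S0: "blow S' = S"
    proof (rule ccontr)
      assume "blow S' \<noteq> S"
      with S0S have "blow S' \<subset> S" by blast
      with min \<open>separates H (blow S') u v\<close> show False by blast
    qed
    have "minimal_separator G S'"
      unfolding minimal_separator_def
    proof (intro exI conjI allI impI)
      have "i \<notin> S'" using i u by (auto simp: S'_def)
      moreover have "j \<notin> S'" using j v by (auto simp: S'_def)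
      moreover have "\<not> connected_avoiding G S' i j" using liftij by blast
      ultimately show "separates G S' i j" unfolding separates_def using S'G i j by blast
      fix T assume T: "T \<subset> S'"
      show "\<not> separates G T i j"
      proof
        assume sT: "separates G T i j"
        obtain w where w: "w \<in> S'" "w \<notin> T" using T by blast
        hence wG: "w \<in> verts G" using S'G by blast
        then obtain x where x: "x \<in> verts (M w)" using gM by blast
        have "x \<in> blow S'" using x w unfolding blow_def by blast
        hence xS: "x \<in> S" using S0 by simp
        have xT: "x \<notin> blow T"
        proof
          assume "x \<in> blow T"
          then obtain w' where "w' \<in> T" "x \<in> verts (M w')" unfolding blow_def by blast
          moreover have "w' \<in> verts G" using \<open>w' \<in> T\<close> T S'G by blast
          ultimately show False using uniq[OF x] wG w by blast
        qed
        have "blow T \<subseteq> blow S'" using T unfolding blow_def by blast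
        hence bT: "blow T \<subseteq> S" using S0 by simp
        have "blow T \<subset> S" using bT xS xT by blast
        moreover have "separates H (blow T) u v"
          unfolding separates_def
        proof (intro conjI)
          show "blow T \<subseteq> verts H" using bT SH by blast
          show "u \<in> verts H - blow T" "v \<in> verts H - blow T" using u v bT by auto
          show "\<not> connected_avoiding H (blow T) u v"
          proof
            assume c: "connected_avoiding H (blow T) u v"
            have "T \<subseteq> verts G" using T S'G by blast
            from proj[OF c i(2) i(1) j(2) j(1) this] sT show False
              unfolding separates_def by blast
          qed
        qed
        ultimately show False using min by blast
      qed
    qed
    then show ?thesis using S0 by blast
  next
    case True
    define N where "N = nbr i"
    have vi: "v \<in> verts (M i)" using j True by simp
    have NS: "N \<subseteq> S"
    proof
      fix z assume z: "z \<in> N"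
      then obtain w where w: "w \<in> verts G" "{i,w} \<in> edges G" "z \<in> verts (M w)"
        by (auto simp: N_def nbr_def)
      show "z \<in> S"
      proof (rule ccontr)
        assume zS: "z \<notin> S"
        have zH: "z \<in> verts H" using w vH by auto
        have e1: "{u,z} \<in> edges H" using cross_edge[OF i(1) w(1) i(2) w(3) w(2)] .
        have "{w,i} \<in> edges G" using w(2) by (simp add: insert_commute)
        hence e2: "{z,v} \<in> edges H" using cross_edge[OF w(1) i(1) w(3) vi] by blast
        let ?R = "\<lambda>x y. x \<in> verts H - S \<and> y \<in> verts H - S \<and> {x,y} \<in> edges H"
        have "?R u z" using u zH zS e1 by simp
        hence "?R\<^sup>*\<^sup>* u z" by (rule r_into_rtranclp)
        moreover have "?R z v" using v zH zS e2 by simp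
        ultimately have "?R\<^sup>*\<^sup>* u v" by (rule rtranclp.rtrancl_into_rtrancl)
        hence "connected_avoiding H S u v" unfolding connected_avoiding_def .
        with nc show False ..
      qed
    qed
    define T where "T = S \<inter> verts (M i)"
    have NTS: "N \<union> T \<subseteq> S" using NS by (auto simp: T_def)
    have ncM: "\<not> connected_avoiding (M i) T u v"
    proof
      assume "connected_avoiding (M i) T u v"
      from M_to_H[OF this i(1)] have "connected_avoiding H S u v" by (auto simp: T_def)
      with nc show False ..
    qed
    have NT: "separates H (N \<union> T) u v"
      unfolding separates_def
    proof (intro conjI)
      show "N \<union> T \<subseteq> verts H" using NTS SH by blast
      show "u \<in> verts H - (N \<union> T)" "v \<in> verts H - (N \<union> T)" using u v NTS by auto
      show "\<not> connected_avoiding H (N \<union> T) u v"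
      proof
        assume "connected_avoiding H (N \<union> T) u v"
        from stay[OF this[unfolded N_def] i(2) i(1)] ncM show False by simp
      qed
    qed
    have SNT: "S = N \<union> T"
    proof (rule ccontr)
      assume "S \<noteq> N \<union> T"
      with NTS have "N \<union> T \<subset> S" by blast
      with min NT show False by blast
    qed
    have "minimal_separator (M i) T"
      unfolding minimal_separator_def
    proof (intro exI conjI allI impI)
      show "separates (M i) T u v" unfolding separates_def
        using i(2) vi u v ncM by (auto simp: T_def)
      fix T2 assume T2: "T2 \<subset> T"
      show "\<not> separates (M i) T2 u v"
      proof
        assume sT: "separates (M i) T2 u v"
        obtain x where x: "x \<in> T" "x \<notin> T2" using T2 by blast
        have "x \<notin> N" using x nbr_disj[OF i(1)] by (auto simp: T_def N_def)
        hence "N \<union> T2 \<subset> S" using x T2 SNT by blast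
        moreover have "separates H (N \<union> T2) u v"
          unfolding separates_def
        proof (intro conjI)
          show "N \<union> T2 \<subseteq> verts H" using T2 SNT SH by blast
          show "u \<in> verts H - (N \<union> T2)" "v \<in> verts H - (N \<union> T2)" using u v T2 SNT by auto
          show "\<not> connected_avoiding H (N \<union> T2) u v"
          proof
            assume "connected_avoiding H (N \<union> T2) u v"
            from stay[OF this[unfolded N_def] i(2) i(1)] sT show False
              unfolding separates_def by simp
          qed
        qed
        ultimately show False using min by blast
      qed
    qed
    then show ?thesis using SNT i(1) N_def by blast
  qed
qed

end

lemma finite_minseps: "finite (verts X) \<Longrightarrow> finite (minimal_separators X)"
proof -
  assume f: "finite (verts X)"
  have "minimal_separators X \<subseteq> Pow (verts X)"
  proof
    fix S assume "S \<in> minimal_separators X"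
    then obtain u v where "separates X S u v"
      unfolding minimal_separators_def minimal_separator_def by blast
    thus "S \<in> Pow (verts X)" unfolding separates_def by simp
  qed
  thus ?thesis using f finite_subset by blast
qed

theorem corollary2:
  fixes G :: "'v graph" and M :: "'v \<Rightarrow> 'a graph"
  assumes "is_graph G"
    and "\<forall>v\<in>verts G. is_graph (M v) \<and> verts (M v) \<noteq> {}"
    and "\<forall>v\<in>verts G. \<forall>w\<in>verts G. v \<noteq> w \<longrightarrow> verts (M v) \<inter> verts (M w) = {}"
  shows "card (minimal_separators (expand G M))
           \<le> card (minimal_separators G) + (\<Sum>v\<in>verts G. card (minimal_separators (M v)))"
proof -
  interpret expn G M by (unfold_locales) (rule assms)+
  have fG: "finite (verts G)" using assms(1) by (simp add: is_graph_def)
  have fM: "\<And>v. v \<in> verts G \<Longrightarrow> finite (minimal_separators (M v))"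
  proof -
    fix v assume "v \<in> verts G"
    with assms(2) have "finite (verts (M v))" unfolding is_graph_def by blast
    thus "finite (minimal_separators (M v))" by (rule finite_minseps)
  qed
  have fmG: "finite (minimal_separators G)" using fG by (rule finite_minseps)
  define A where "A = blow ` minimal_separators G"
  define B where "B = (\<Union>i\<in>verts G. (\<lambda>T. nbr i \<union> T) ` minimal_separators (M i))"
  have sub: "minimal_separators (expand G M) \<subseteq> A \<union> B"
  proof
    fix S assume "S \<in> minimal_separators (expand G M)"
    hence "minimal_separator (expand G M) S" by (simp add: minimal_separators_def)
    from classify[OF this] show "S \<in> A \<union> B"
    proof
      assume "\<exists>S'. minimal_separator G S' \<and> S = blow S'"
      then obtain S' where "minimal_separator G S'" "S = blow S'" by blast
      hence "S \<in> A" unfolding A_def minimal_separators_def by (intro image_eqI) auto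
      thus ?thesis by blast
    next
      assume "\<exists>i\<in>verts G. \<exists>T. minimal_separator (M i) T \<and> S = nbr i \<union> T"
      then obtain i T where "i \<in> verts G" "minimal_separator (M i) T" "S = nbr i \<union> T" by blast
      hence "S \<in> (\<lambda>T. nbr i \<union> T) ` minimal_separators (M i)"
        unfolding minimal_separators_def by (intro image_eqI) auto
      hence "S \<in> B" unfolding B_def using \<open>i \<in> verts G\<close> by blast
      thus ?thesis by blast
    qed
  qed
  have fA: "finite A" using fmG by (simp add: A_def)
  have fB: "finite B" unfolding B_def using fG fM by (intro finite_UN_I finite_imageI)
  have c1: "card (minimal_separators (expand G M)) \<le> card (A \<union> B)"
    using sub fA fB by (simp add: card_mono)
  have c2: "card (A \<union> B) \<le> card A + card B" by (rule card_Un_le)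
  have c3: "card A \<le> card (minimal_separators G)" unfolding A_def using fmG by (rule card_image_le)
  have c4: "card B \<le> (\<Sum>i\<in>verts G. card ((\<lambda>T. nbr i \<union> T) ` minimal_separators (M i)))"
    unfolding B_def using fG by (rule card_UN_le)
  have c5: "(\<Sum>i\<in>verts G. card ((\<lambda>T. nbr i \<union> T) ` minimal_separators (M i)))
      \<le> (\<Sum>v\<in>verts G. card (minimal_separators (M v)))"
    using fM by (intro sum_mono card_image_le) auto
  from c1 c2 c3 c4 c5 show ?thesis by linarith
qed

end
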